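(* Let $G=(V,E)$ be an undirected graph, $\vec{x}\in\mathbb{R}^n$ non-negative with $\|\vec{x}\|_1=1$, and $\delta\in(0,1)$. Consider any of the following choices of $(a,b,(w_i))$: (i) PageRank/Personalized PageRank: $a=0,b=1$, $w_i=\alpha(1-\alpha)^i$ with constant $\alpha\in(0,1)$; (ii) heat kernel PageRank: $a=0,b=1$, $w_i=e^{-t}t^i/i!$ with constant $t>0$; (iii) $k$-hop transition probability: $a=0,b=1$, $w_k=1$ and $w_i=0$ for $i\neq k$; (iv) Katz: $a=b=0$, $w_i=\beta^i$ with constant $0<\beta<1/\lambda_1$, where $\lambda_1$ is the largest eigenvalue of $\mathbf{A}$. Let $\mathbf{P}=\mathbf{D}^{-a}\mathbf{A}\mathbf{D}^{-b}$, $\vec{\pi}=\sum_{i=0}^\infty w_i\mathbf{P}^i\vec{x}$ and $\vec{\pi}_L=\sum_{i=0}^L w_i\mathbf{P}^i\vec{x}$. Then (without any further assumption on the weights) there is an integer $L$, with $L=O(\log(1/\delta))$ in cases (i), (ii), (iv) and any $L\ge k$ in case (iii), such that $\left\|\sum_{i=L+1}^\infty w_i\mathbf{P}^i\vec{x}\right\|_2\le\delta/19$, and consequently: if $\hat{\vec{\pi}}\in\mathbb{R}^n$ satisfies $|\vec{\pi}_L(v)-\hat{\vec{\pi}}(v)|\le\frac{1}{20}\vec{\pi}_L(v)$ for every $v$ with $\vec{\pi}_L(v)>\frac{18}{19}\delta$, then $|\vec{\pi}(v)-\hat{\vec{\pi}}(v)|\le\frac{1}{10}\vec{\pi}(v)$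 for every $v$ with $\vec{\pi}(v)\ge\delta$.
   Context: $G=(V,E)$ has $n$ nodes; $\mathbf{A}$ is its adjacency matrix and $\mathbf{D}$ the diagonal degree matrix with $\mathbf{D}(i,i)=\sum_j\mathbf{A}(i,j)$; $\mathbf{D}^{0}$ is the identity. *)

theory Defs
  imports "HOL-Analysis.Analysis"
begin

text \<open>Vectors in R^n are functions nat => real, only indices < n matter;
  n x n matrices are functions nat => nat => real, only indices < n matter.\<close>

definition undirected_graph :: "nat \<Rightarrow> (nat \<Rightarrow> nat \<Rightarrow> real) \<Rightarrow> bool" where
  "undirected_graph n A \<longleftrightarrow>
     (\<forall>i<n. \<forall>j<n. (A i j = 0 \<or> A i j = 1) \<and> A i j = A j i) \<and> (\<forall>i<n. A i i = 0)"

definition degree :: "nat \<Rightarrow> (nat \<Rightarrow> nat \<Rightarrow> real) \<Rightarrow> nat \<Rightarrow> real" where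
  "degree n A i = (\<Sum>j<n. A i j)"

text \<open>P = D^{-a} A D^{-b}; note D^0 = I since d^0 = 1.\<close>
definition transM :: "nat \<Rightarrow> (nat \<Rightarrow> nat \<Rightarrow> real) \<Rightarrow> nat \<Rightarrow> nat \<Rightarrow> nat \<Rightarrow> nat \<Rightarrow> real" where
  "transM n A a b i j = inverse (degree n A i ^ a) * A i j * inverse (degree n A j ^ b)"

definition mat_vec :: "nat \<Rightarrow> (nat \<Rightarrow> nat \<Rightarrow> real) \<Rightarrow> (nat \<Rightarrow> real) \<Rightarrow> (nat \<Rightarrow> real)" where
  "mat_vec n M v = (\<lambda>i. \<Sum>j<n. M i j * v j)"

definition mat_pow_vec :: "nat \<Rightarrow> (nat \<Rightarrow> nat \<Rightarrow> real) \<Rightarrow> nat \<Rightarrow> (nat \<Rightarrow> real) \<Rightarrow> (nat \<Rightarrow> real)" where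
  "mat_pow_vec n M i x = (mat_vec n M ^^ i) x"

definition norm1 :: "nat \<Rightarrow> (nat \<Rightarrow> real) \<Rightarrow> real" where
  "norm1 n v = (\<Sum>i<n. \<bar>v i\<bar>)"

definition norm2 :: "nat \<Rightarrow> (nat \<Rightarrow> real) \<Rightarrow> real" where
  "norm2 n v = sqrt (\<Sum>i<n. (v i)^2)"

definition eigenvalues :: "nat \<Rightarrow> (nat \<Rightarrow> nat \<Rightarrow> real) \<Rightarrow> real set" where
  "eigenvalues n M = {\<mu>. \<exists>v. (\<exists>i<n. v i \<noteq> 0) \<and> (\<forall>i<n. (\<Sum>j<n. M i j * v j) = \<mu> * v i)}"

definition largest_eigenvalue :: "nat \<Rightarrow> (nat \<Rightarrow> nat \<Rightarrow> real) \<Rightarrow> real" where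
  "largest_eigenvalue n M = Max (eigenvalues n M)"

definition ppr :: "nat \<Rightarrow> (nat \<Rightarrow> nat \<Rightarrow> real) \<Rightarrow> nat \<Rightarrow> nat \<Rightarrow> (nat \<Rightarrow> real) \<Rightarrow> (nat \<Rightarrow> real) \<Rightarrow> (nat \<Rightarrow> real)" where
  "ppr n A a b w x = (\<lambda>v. \<Sum>i. w i * mat_pow_vec n (transM n A a b) i x v)"

definition ppr_trunc :: "nat \<Rightarrow> (nat \<Rightarrow> nat \<Rightarrow> real) \<Rightarrow> nat \<Rightarrow> nat \<Rightarrow> (nat \<Rightarrow> real) \<Rightarrow> nat \<Rightarrow> (nat \<Rightarrow> real) \<Rightarrow> (nat \<Rightarrow> real)" where
  "ppr_trunc n A a b w L x = (\<lambda>v. \<Sum>i\<le>L. w i * mat_pow_vec n (transM n A a b) i x v)"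

definition ppr_tail :: "nat \<Rightarrow> (nat \<Rightarrow> nat \<Rightarrow> real) \<Rightarrow> nat \<Rightarrow> nat \<Rightarrow> (nat \<Rightarrow> real) \<Rightarrow> nat \<Rightarrow> (nat \<Rightarrow> real) \<Rightarrow> (nat \<Rightarrow> real)" where
  "ppr_tail n A a b w L x = (\<lambda>v. \<Sum>i. w (i + L + 1) * mat_pow_vec n (transM n A a b) (i + L + 1) x v)"

definition good_trunc :: "nat \<Rightarrow> (nat \<Rightarrow> nat \<Rightarrow> real) \<Rightarrow> nat \<Rightarrow> nat \<Rightarrow> (nat \<Rightarrow> real) \<Rightarrow> (nat \<Rightarrow> real) \<Rightarrow> real \<Rightarrow> nat \<Rightarrow> bool" where
  "good_trunc n A a b w x \<delta> L \<longleftrightarrow>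
     (\<forall>v<n. summable (\<lambda>i. w i * mat_pow_vec n (transM n A a b) i x v)) \<and>
     norm2 n (ppr_tail n A a b w L x) \<le> \<delta> / 19 \<and>
     (\<forall>pihat :: nat \<Rightarrow> real.
        (\<forall>v<n. ppr_trunc n A a b w L x v > 18/19 * \<delta> \<longrightarrow>
               \<bar>ppr_trunc n A a b w L x v - pihat v\<bar> \<le> 1/20 * ppr_trunc n A a b w L x v) \<longrightarrow>
        (\<forall>v<n. ppr n A a b w x v \<ge> \<delta> \<longrightarrow>
               \<bar>ppr n A a b w x v - pihat v\<bar> \<le> 1/10 * ppr n A a b w x v))"

definition valid_input :: "nat \<Rightarrow> (nat \<Rightarrow> real) \<Rightarrow> bool" where
  "valid_input n x \<longleftrightarrow> (\<forall>i<n. x i \<ge> 0) \<and> norm1 n x = 1"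

end

theory Submission
  imports Defs "Jordan_Normal_Form.Char_Poly"
begin


lemma eig_finite: "finite (eigenvalues n A)"
proof -
  define M where "M = mat n n (\<lambda>(i,j). A i j)"
  have M: "M \<in> carrier_mat n n" unfolding M_def by auto
  have sub: "eigenvalues n A \<subseteq> {k. poly (char_poly M) k = 0}"
  proof
    fix \<mu> assume "\<mu> \<in> eigenvalues n A"
    then obtain v where v: "\<exists>i<n. v i \<noteq> 0" "\<forall>i<n. (\<Sum>j<n. A i j * v j) = \<mu> * v i"
      unfolding eigenvalues_def by auto
    define u where "u = vec n v"
    have "eigenvector M u \<mu>"
      unfolding eigenvector_def
    proof (intro conjI)
      show "u \<in> carrier_vec (dim_row M)" using M unfolding u_def by auto
      show "u \<noteq> 0\<^sub>v (dim_row M)" using v(1) M unfolding u_def by (auto simp: vec_eq_iff)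
      show "M *\<^sub>v u = \<mu> \<cdot>\<^sub>v u"
        using v(2) unfolding M_def u_def
        by (auto simp: vec_eq_iff mult_mat_vec_def scalar_prod_def lessThan_atLeast0 intro!: sum.cong)
    qed
    then have "eigenvalue M \<mu>" unfolding eigenvalue_def by auto
    then show "\<mu> \<in> {k. poly (char_poly M) k = 0}" using eigenvalue_root_char_poly[OF M] by auto
  qed
  have "char_poly M \<noteq> 0" using degree_monic_char_poly[OF M] by auto
  then have "finite {k. poly (char_poly M) k = 0}" by (rule poly_roots_finite)
  then show ?thesis using sub finite_subset by blast
qed


lemma sum_sq_le_sq_sum:
  fixes t :: "nat \<Rightarrow> real"
  assumes "\<And>v. v < n \<Longrightarrow> 0 \<le> t v"
  shows "(\<Sum>v<n. (t v)^2) \<le> (\<Sum>v<n. t v)^2"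
  using assms
proof (induction n)
  case 0 then show ?case by simp
next
  case (Suc n)
  have IH: "(\<Sum>v<n. (t v)^2) \<le> (\<Sum>v<n. t v)^2" using Suc by auto
  have a: "0 \<le> (\<Sum>v<n. t v)" using Suc.prems by (intro sum_nonneg) auto
  have b: "0 \<le> t n" using Suc.prems by auto
  have "(\<Sum>v<Suc n. (t v)^2) = (\<Sum>v<n. (t v)^2) + (t n)^2" by simp
  also have "\<dots> \<le> (\<Sum>v<n. t v)^2 + 2 * (\<Sum>v<n. t v) * t n + (t n)^2"
    using IH a b by (smt (verit) mult_nonneg_nonneg)
  also have "\<dots> = (\<Sum>v<Suc n. t v)^2" by (simp add: power2_eq_square algebra_simps)
  finally show ?case .
qed

lemma norm2_le_sum:
  assumes "\<And>v. v < n \<Longrightarrow> 0 \<le> t v"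
  shows "norm2 n t \<le> (\<Sum>v<n. t v)"
proof -
  have a: "0 \<le> (\<Sum>v<n. t v)" using assms by (intro sum_nonneg) auto
  have "norm2 n t \<le> sqrt ((\<Sum>v<n. t v)^2)"
    unfolding norm2_def by (rule real_sqrt_le_mono) (rule sum_sq_le_sq_sum[OF assms])
  also have "\<dots> = (\<Sum>v<n. t v)" using a by simp
  finally show ?thesis .
qed

lemma generic:
  fixes w e :: "nat \<Rightarrow> real"
  assumes nn: "\<And>i v. v < n \<Longrightarrow> 0 \<le> w i * mat_pow_vec n (transM n A a b) i x v"
    and bnd: "\<And>i. (\<Sum>v<n. w i * mat_pow_vec n (transM n A a b) i x v) \<le> e i"
    and es: "summable e"
    and tl: "(\<Sum>j. e (j + L + 1)) < \<delta> / 19"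
    and dpos: "0 < \<delta>"
  shows "good_trunc n A a b w x \<delta> L"
proof -
  define f where "f i v = w i * mat_pow_vec n (transM n A a b) i x v" for i v
  have le_e: "f i v \<le> e i" if "v < n" for i v
  proof -
    have "f i v \<le> (\<Sum>v<n. f i v)"
      using that nn unfolding f_def by (intro member_le_sum) auto
    then show ?thesis using bnd[of i] unfolding f_def by simp
  qed
  have sumf: "summable (\<lambda>i. f i v)" if "v < n" for v
    by (rule summable_comparison_test[OF _ es]) (use le_e nn that f_def in auto)
  have sumfs: "summable (\<lambda>j. f (j + L + 1) v)" if "v < n" for v
    using summable_ignore_initial_segment[OF sumf[OF that], of "L+1"] by (simp add: add.assoc)
  have ess: "summable (\<lambda>j. e (j + L + 1))"
    using summable_ignore_initial_segment[OF es, of "L+1"] by (simp add: add.assoc)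
  define t where "t v = (\<Sum>j. f (j + L + 1) v)" for v
  have t_eq: "ppr_tail n A a b w L x = t" unfolding ppr_tail_def t_def f_def by auto
  have tnn: "0 \<le> t v" if "v < n" for v
    unfolding t_def using sumfs[OF that] nn that f_def by (intro suminf_nonneg) auto
  have "(\<Sum>v<n. t v) = (\<Sum>j. \<Sum>v<n. f (j + L + 1) v)"
    unfolding t_def by (rule suminf_sum[symmetric]) (use sumfs in auto)
  also have "\<dots> \<le> (\<Sum>j. e (j + L + 1))"
  proof (rule suminf_le)
    show "summable (\<lambda>j. \<Sum>v<n. f (j + L + 1) v)"
      by (rule summable_sum) (use sumfs in auto)
  qed (use bnd f_def ess in auto)
  finally have tsum: "(\<Sum>v<n. t v) < \<delta> / 19" using tl by linarith
  have tv: "t v < \<delta> / 19" if "v < n" for v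
  proof -
    have "t v \<le> (\<Sum>v<n. t v)" using that tnn by (intro member_le_sum) auto
    then show ?thesis using tsum by linarith
  qed
  have split: "ppr n A a b w x v = ppr_trunc n A a b w L x v + t v" if "v < n" for v
  proof -
    have "ppr n A a b w x v = (\<Sum>i. f i v)" unfolding ppr_def f_def by simp
    also have "\<dots> = (\<Sum>j. f (j + Suc L) v) + (\<Sum>i<Suc L. f i v)"
      by (rule suminf_split_initial_segment[OF sumf[OF that]])
    also have "(\<Sum>i<Suc L. f i v) = ppr_trunc n A a b w L x v"
      unfolding ppr_trunc_def f_def lessThan_Suc_atMost by simp
    finally show ?thesis unfolding t_def by simp
  qed
  have n2: "norm2 n (ppr_tail n A a b w L x) \<le> \<delta> / 19"
    unfolding t_eq using norm2_le_sum[of n t] tnn tsum by fastforce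
  show ?thesis
    unfolding good_trunc_def
  proof (intro conjI allI impI)
    fix v assume "v < n"
    then show "summable (\<lambda>i. w i * mat_pow_vec n (transM n A a b) i x v)"
      using sumf f_def by simp
  next
    show "norm2 n (ppr_tail n A a b w L x) \<le> \<delta> / 19" by (rule n2)
  next
    fix pihat :: "nat \<Rightarrow> real" and v
    assume H: "\<forall>v<n. 18 / 19 * \<delta> < ppr_trunc n A a b w L x v \<longrightarrow>
             \<bar>ppr_trunc n A a b w L x v - pihat v\<bar> \<le> 1 / 20 * ppr_trunc n A a b w L x v"
      and v: "v < n" and big: "\<delta> \<le> ppr n A a b w x v"
    define p where "p = ppr n A a b w x v"
    define q where "q = ppr_trunc n A a b w L x v"
    have pq: "p = q + t v" using split[OF v] unfolding p_def q_def .
    have t0: "0 \<le> t v" "t v < \<delta>/19" using tnn tv v by auto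
    have "18 / 19 * \<delta> < q" using pq t0 big p_def by linarith
    then have "\<bar>q - pihat v\<bar> \<le> 1/20 * q" using H v q_def by auto
    then have "\<bar>p - pihat v\<bar> \<le> t v + 1/20 * q" using pq t0 by linarith
    also have "\<dots> = p/20 + 19/20 * t v" using pq by (simp add: field_simps)
    also have "\<dots> \<le> 1/10 * p" using t0 big p_def by linarith
    finally show "\<bar>ppr n A a b w x v - pihat v\<bar> \<le> 1 / 10 * ppr n A a b w x v"
      unfolding p_def .
  qed
qed



lemma chooseL:
  fixes q D :: real
  assumes q0: "0 \<le> q" and q1: "q < 1" and D0: "0 \<le> D"
  shows "\<exists>C. \<forall>\<delta>. 0 < \<delta> \<and> \<delta> < 1 \<longrightarrow> (\<exists>L::nat. real L \<le> C * (1 + ln (1 / \<delta>)) \<and> D * q ^ (L + 1) < \<delta>)"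
proof (cases "q = 0")
  case True
  then show ?thesis by (intro exI[of _ 0]) auto
next
  case False
  then have qp: "0 < q" using q0 by auto
  define c where "c = ln (1 / q)"
  have cp: "0 < c" unfolding c_def using qp q1 by simp
  have lnq: "ln q = - c" unfolding c_def using qp by (simp add: ln_div)
  define D' where "D' = max D 1"
  have D'1: "1 \<le> D'" unfolding D'_def by simp
  have lD: "0 \<le> ln D'" using D'1 by simp
  define C where "C = (ln D' + 1) / c + 1"
  show ?thesis
  proof (intro exI[of _ C] allI impI)
    fix \<delta> :: real assume d: "0 < \<delta> \<and> \<delta> < 1"
    define l where "l = ln (1 / \<delta>)"
    have lp: "0 < l" unfolding l_def using d by simp
    have ld: "ln \<delta> = - l" unfolding l_def using d by (simp add: ln_div)
    define X where "X = (ln D' + l) / c"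
    have X0: "0 \<le> X" unfolding X_def using lD lp cp by simp
    define L where "L = nat \<lceil>X\<rceil>"
    have LX: "X \<le> real L" "real L \<le> X + 1" unfolding L_def using X0
      by (simp_all add: of_nat_nat)
    have "real L \<le> X + 1" by (rule LX(2))
    also have "X + 1 = ln D' / c + l / c + 1" unfolding X_def by (simp add: add_divide_distrib)
    also have "\<dots> \<le> C * (1 + l)"
    proof -
      have "l / c \<le> ((ln D' + 1) / c + 1) * l"
      proof -
        have "1 / c \<le> (ln D' + 1) / c" using lD cp by (intro divide_right_mono) auto
        then have "1 / c \<le> (ln D' + 1) / c + 1" by linarith
        then have "(1/c) * l \<le> ((ln D' + 1) / c + 1) * l" using lp by (intro mult_right_mono) auto
        then show ?thesis by simp
      qed
      moreover have "ln D' / c + 1 \<le> (ln D' + 1) / c + 1" using cp by (simp add: divide_right_mono)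
      moreover have "C * (1 + l) = C + C * l" by (simp add: algebra_simps)
      ultimately show ?thesis unfolding C_def by linarith
    qed
    finally have L1: "real L \<le> C * (1 + ln (1 / \<delta>))" unfolding l_def .
    have "ln (D' * q ^ (L + 1)) = ln D' + real (L + 1) * ln q"
      using D'1 qp by (simp add: ln_mult ln_realpow algebra_simps)
    also have "\<dots> = ln D' - real (L + 1) * c" using lnq by simp
    also have "\<dots> < ln \<delta>"
    proof -
      have "X < real (L + 1)" using LX by simp
      then have "X * c < real (L + 1) * c" using cp by (intro mult_strict_right_mono) auto
      moreover have "X * c = ln D' + l" unfolding X_def using cp by simp
      ultimately show ?thesis using ld by linarith
    qed
    finally have "D' * q ^ (L + 1) < \<delta>"
      using D'1 qp d by (subst ln_less_cancel_iff[symmetric]) auto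
    moreover have "D * q ^ (L + 1) \<le> D' * q ^ (L + 1)"
      unfolding D'_def using qp by (intro mult_right_mono) auto
    ultimately have "D * q ^ (L + 1) < \<delta>" by linarith
    with L1 show "\<exists>L::nat. real L \<le> C * (1 + ln (1 / \<delta>)) \<and> D * q ^ (L + 1) < \<delta>" by blast
  qed
qed

lemma geom_tail:
  fixes q K :: real
  assumes "0 \<le> q" "q < 1"
  shows "summable (\<lambda>i. K * q ^ i)" "(\<Sum>j. K * q ^ (j + L + 1)) = K * q ^ (L + 1) / (1 - q)"
proof -
  have g: "(\<lambda>j. q ^ j) sums (1 / (1 - q))" using assms by (intro geometric_sums) auto
  show "summable (\<lambda>i. K * q ^ i)" using g by (intro summable_mult) (auto simp: sums_iff)
  have "(\<lambda>j. K * q ^ (L + 1) * q ^ j) sums (K * q ^ (L + 1) * (1 / (1 - q)))"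
    by (rule sums_mult[OF g])
  moreover have "(\<lambda>j. K * q ^ (L + 1) * q ^ j) = (\<lambda>j. K * q ^ (j + L + 1))"
    by (auto simp: power_add algebra_simps)
  ultimately show "(\<Sum>j. K * q ^ (j + L + 1)) = K * q ^ (L + 1) / (1 - q)"
    by (auto simp: sums_iff)
qed

lemma transM01: "transM n A 0 1 i j = A i j * inverse (Defs.degree n A j)"
  unfolding transM_def by simp

lemma transM00: "transM n A 0 0 = A"
  unfolding transM_def by (intro ext) simp

lemma mpv_Suc: "mat_pow_vec n M (Suc i) x = mat_vec n M (mat_pow_vec n M i x)"
  unfolding mat_pow_vec_def by simp

lemma mpv_0: "mat_pow_vec n M 0 x = x"
  unfolding mat_pow_vec_def by simp

lemma A_nonneg:
  assumes "undirected_graph n A" "i < n" "j < n" shows "0 \<le> A i j"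
proof -
  have "A i j = 0 \<or> A i j = 1" using assms unfolding undirected_graph_def by blast
  then show ?thesis by auto
qed

lemma degree_nonneg: "undirected_graph n A \<Longrightarrow> j < n \<Longrightarrow> 0 \<le> Defs.degree n A j"
  unfolding Defs.degree_def by (intro sum_nonneg) (use A_nonneg in auto)

lemma col_sum: "undirected_graph n A \<Longrightarrow> j < n \<Longrightarrow> (\<Sum>i<n. A i j) = Defs.degree n A j"
  unfolding Defs.degree_def undirected_graph_def by (intro sum.cong) auto

lemma sub_stoch:
  assumes G: "undirected_graph n A" and v: "\<And>j. j < n \<Longrightarrow> 0 \<le> v j"
  shows "\<And>i. i < n \<Longrightarrow> 0 \<le> mat_vec n (transM n A 0 1) v i"
    and "(\<Sum>i<n. mat_vec n (transM n A 0 1) v i) \<le> (\<Sum>j<n. v j)"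
proof -
  fix i assume "i < n"
  then show "0 \<le> mat_vec n (transM n A 0 1) v i"
    unfolding mat_vec_def transM01
    using A_nonneg[OF G] degree_nonneg[OF G] v by (intro sum_nonneg mult_nonneg_nonneg) auto
next
  have "(\<Sum>i<n. mat_vec n (transM n A 0 1) v i) = (\<Sum>i<n. \<Sum>j<n. A i j * inverse (Defs.degree n A j) * v j)"
    unfolding mat_vec_def transM01 by simp
  also have "\<dots> = (\<Sum>j<n. \<Sum>i<n. A i j * inverse (Defs.degree n A j) * v j)" by (rule sum.swap)
  also have "\<dots> = (\<Sum>j<n. Defs.degree n A j * inverse (Defs.degree n A j) * v j)"
  proof (intro sum.cong refl)
    fix j assume "j \<in> {..<n}"
    then have "(\<Sum>i<n. A i j * inverse (Defs.degree n A j) * v j) = (\<Sum>i<n. A i j) * (inverse (Defs.degree n A j) * v j)"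
      by (simp add: sum_distrib_right mult.assoc)
    also have "\<dots> = Defs.degree n A j * inverse (Defs.degree n A j) * v j" using col_sum[OF G] \<open>j \<in> {..<n}\<close> by simp
    finally show "(\<Sum>i<n. A i j * inverse (Defs.degree n A j) * v j) = Defs.degree n A j * inverse (Defs.degree n A j) * v j" .
  qed
  also have "\<dots> \<le> (\<Sum>j<n. v j)"
  proof (intro sum_mono)
    fix j assume "j \<in> {..<n}"
    then show "Defs.degree n A j * inverse (Defs.degree n A j) * v j \<le> v j"
      using v[of j] by (cases "Defs.degree n A j = 0") auto
  qed
  finally show "(\<Sum>i<n. mat_vec n (transM n A 0 1) v i) \<le> (\<Sum>j<n. v j)" .
qed

lemma pow_stoch:
  assumes G: "undirected_graph n A" and x: "valid_input n x"
  shows "\<And>v. v < n \<Longrightarrow> 0 \<le> mat_pow_vec n (transM n A 0 1) i x v"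
    and "(\<Sum>v<n. mat_pow_vec n (transM n A 0 1) i x v) \<le> 1"
proof -
  have "(\<forall>v<n. 0 \<le> mat_pow_vec n (transM n A 0 1) i x v) \<and> (\<Sum>v<n. mat_pow_vec n (transM n A 0 1) i x v) \<le> 1"
  proof (induction i)
    case 0
    have "norm1 n x = (\<Sum>v<n. x v)" unfolding norm1_def using x unfolding valid_input_def by simp
    then show ?case using x unfolding valid_input_def mpv_0 by simp
  next
    case (Suc i)
    then have "\<And>j. j < n \<Longrightarrow> 0 \<le> mat_pow_vec n (transM n A 0 1) i x j" by auto
    note S = sub_stoch[OF G, of "mat_pow_vec n (transM n A 0 1) i x", OF this]
    show ?case unfolding mpv_Suc using S Suc.IH by (meson order_trans)
  qed
  then show "\<And>v. v < n \<Longrightarrow> 0 \<le> mat_pow_vec n (transM n A 0 1) i x v"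
    and "(\<Sum>v<n. mat_pow_vec n (transM n A 0 1) i x v) \<le> 1" by auto
qed

lemma weighted_stoch:
  assumes G: "undirected_graph n A" and x: "valid_input n x" and w: "0 \<le> w i"
  shows "\<And>v. v < n \<Longrightarrow> 0 \<le> w i * mat_pow_vec n (transM n A 0 1) i x v"
    and "(\<Sum>v<n. w i * mat_pow_vec n (transM n A 0 1) i x v) \<le> w i"
proof -
  show "\<And>v. v < n \<Longrightarrow> 0 \<le> w i * mat_pow_vec n (transM n A 0 1) i x v"
    using pow_stoch(1)[OF G x] w by simp
  have "(\<Sum>v<n. w i * mat_pow_vec n (transM n A 0 1) i x v) = w i * (\<Sum>v<n. mat_pow_vec n (transM n A 0 1) i x v)"
    by (simp add: sum_distrib_left)
  also have "\<dots> \<le> w i * 1" using pow_stoch(2)[OF G x] w by (intro mult_left_mono) auto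
  finally show "(\<Sum>v<n. w i * mat_pow_vec n (transM n A 0 1) i x v) \<le> w i" by simp
qed



lemma case1:
  fixes \<alpha> :: real
  assumes a: "0 < \<alpha>" "\<alpha> < 1"
  shows "\<exists>C::real. \<forall>n A x \<delta>. undirected_graph n A \<and> valid_input n x \<and> 0 < \<delta> \<and> \<delta> < 1 \<longrightarrow>
         (\<exists>L::nat. real L \<le> C * (1 + ln (1 / \<delta>)) \<and>
            good_trunc n A 0 1 (\<lambda>i. \<alpha> * (1 - \<alpha>) ^ i) x \<delta> L)"
proof -
  obtain C where C: "\<And>\<delta>. 0 < \<delta> \<and> \<delta> < 1 \<Longrightarrow> (\<exists>L::nat. real L \<le> C * (1 + ln (1 / \<delta>)) \<and> 19 * (1 - \<alpha>) ^ (L + 1) < \<delta>)"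
    using chooseL[of "1 - \<alpha>" 19] a by auto
  show ?thesis
  proof (intro exI[of _ C] allI impI)
    fix n A x and \<delta> :: real
    assume H: "undirected_graph n A \<and> valid_input n x \<and> 0 < \<delta> \<and> \<delta> < 1"
    then obtain L where L: "real L \<le> C * (1 + ln (1 / \<delta>))" "19 * (1 - \<alpha>) ^ (L + 1) < \<delta>"
      using C by blast
    have w0: "\<And>i. 0 \<le> \<alpha> * (1 - \<alpha>) ^ i" using a by simp
    have "good_trunc n A 0 1 (\<lambda>i. \<alpha> * (1 - \<alpha>) ^ i) x \<delta> L"
    proof (rule generic[where e = "\<lambda>i. \<alpha> * (1 - \<alpha>) ^ i"])
      show "\<And>i v. v < n \<Longrightarrow> 0 \<le> \<alpha> * (1 - \<alpha>) ^ i * mat_pow_vec n (transM n A 0 1) i x v"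
        using weighted_stoch(1)[of n A x "\<lambda>i. \<alpha> * (1 - \<alpha>) ^ i"] H w0 by blast
      show "\<And>i. (\<Sum>v<n. \<alpha> * (1 - \<alpha>) ^ i * mat_pow_vec n (transM n A 0 1) i x v) \<le> \<alpha> * (1 - \<alpha>) ^ i"
        using weighted_stoch(2)[of n A x "\<lambda>i. \<alpha> * (1 - \<alpha>) ^ i"] H w0 by blast
      show "summable (\<lambda>i. \<alpha> * (1 - \<alpha>) ^ i)" using geom_tail(1)[of "1 - \<alpha>" \<alpha>] a by simp
      have "(\<Sum>j. \<alpha> * (1 - \<alpha>) ^ (j + L + 1)) = \<alpha> * (1 - \<alpha>) ^ (L + 1) / (1 - (1 - \<alpha>))"
        using geom_tail(2)[of "1 - \<alpha>" \<alpha> L] a by simp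
      also have "\<dots> = (1 - \<alpha>) ^ (L + 1)" using a by simp
      finally show "(\<Sum>j. \<alpha> * (1 - \<alpha>) ^ (j + L + 1)) < \<delta> / 19" using L(2) by simp
      show "0 < \<delta>" using H by simp
    qed
    then show "\<exists>L::nat. real L \<le> C * (1 + ln (1 / \<delta>)) \<and> good_trunc n A 0 1 (\<lambda>i. \<alpha> * (1 - \<alpha>) ^ i) x \<delta> L"
      using L(1) by blast
  qed
qed

lemma exp_term_le:
  fixes y :: real assumes "0 \<le> y"
  shows "y ^ i / fact i \<le> exp y"
proof -
  have s: "(\<lambda>n. y ^ n / fact n) sums exp y" using exp_converges[of y] by (simp add: divide_inverse mult.commute scaleR_conv_of_real)
  have "(\<Sum>n\<in>{i}. y ^ n / fact n) \<le> (\<Sum>n. y ^ n / fact n)"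
    by (rule sum_le_suminf) (use s assms in \<open>auto simp: sums_iff\<close>)
  then show ?thesis using s by (simp add: sums_iff)
qed

lemma heat_w_le:
  fixes t :: real assumes "0 < t"
  shows "exp (- t) * t ^ i / fact i \<le> exp t * (1/2) ^ i"
proof -
  have "exp (- t) * t ^ i / fact i = exp (- t) * ((2 * t) ^ i / fact i) * (1/2) ^ i"
    by (simp add: power_mult_distrib field_simps)
  also have "\<dots> \<le> exp (- t) * exp (2 * t) * (1/2) ^ i"
    using exp_term_le[of "2 * t" i] assms by (intro mult_right_mono mult_left_mono) auto
  also have "exp (- t) * exp (2 * t) = exp t" by (simp add: exp_add[symmetric])
  finally show ?thesis .
qed

lemma case2:
  fixes t :: real
  assumes tp: "0 < t"
  shows "\<exists>C::real. \<forall>n A x \<delta>. undirected_graph n A \<and> valid_input n x \<and> 0 < \<delta> \<and> \<delta> < 1 \<longrightarrow>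
         (\<exists>L::nat. real L \<le> C * (1 + ln (1 / \<delta>)) \<and>
            good_trunc n A 0 1 (\<lambda>i. exp (- t) * t ^ i / fact i) x \<delta> L)"
proof -
  obtain C where C: "\<And>\<delta>. 0 < \<delta> \<and> \<delta> < 1 \<Longrightarrow> (\<exists>L::nat. real L \<le> C * (1 + ln (1 / \<delta>)) \<and> (38 * exp t) * (1/2) ^ (L + 1) < \<delta>)"
    using chooseL[of "1/2" "38 * exp t"] by auto
  show ?thesis
  proof (intro exI[of _ C] allI impI)
    fix n A x and \<delta> :: real
    assume H: "undirected_graph n A \<and> valid_input n x \<and> 0 < \<delta> \<and> \<delta> < 1"
    then obtain L where L: "real L \<le> C * (1 + ln (1 / \<delta>))" "(38 * exp t) * (1/2) ^ (L + 1) < \<delta>"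
      using C by blast
    define w where "w = (\<lambda>i. exp (- t) * t ^ i / fact i)"
    have w0: "\<And>i. 0 \<le> w i" unfolding w_def using tp by simp
    have "good_trunc n A 0 1 w x \<delta> L"
    proof (rule generic[where e = "\<lambda>i. exp t * (1/2) ^ i"])
      show "\<And>i v. v < n \<Longrightarrow> 0 \<le> w i * mat_pow_vec n (transM n A 0 1) i x v"
        using weighted_stoch(1)[of n A x w] H w0 by blast
      show "\<And>i. (\<Sum>v<n. w i * mat_pow_vec n (transM n A 0 1) i x v) \<le> exp t * (1/2) ^ i"
        using weighted_stoch(2)[of n A x w] H w0 heat_w_le[OF tp] unfolding w_def by (meson order_trans)
      show "summable (\<lambda>i. exp t * (1/2::real) ^ i)" using geom_tail(1)[of "1/2" "exp t"] by simp
      have "(\<Sum>j. exp t * (1/2::real) ^ (j + L + 1)) = exp t * (1/2) ^ (L + 1) / (1 - 1/2)"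
        using geom_tail(2)[of "1/2" "exp t" L] by simp
      also have "\<dots> = 2 * exp t * (1/2) ^ (L + 1)" by simp
      finally show "(\<Sum>j. exp t * (1/2::real) ^ (j + L + 1)) < \<delta> / 19" using L(2) by simp
      show "0 < \<delta>" using H by simp
    qed
    then show "\<exists>L::nat. real L \<le> C * (1 + ln (1 / \<delta>)) \<and> good_trunc n A 0 1 (\<lambda>i. exp (- t) * t ^ i / fact i) x \<delta> L"
      using L(1) unfolding w_def by blast
  qed
qed

lemma case3:
  assumes H: "undirected_graph n A \<and> valid_input n x \<and> 0 < \<delta> \<and> \<delta> < 1" and Lk: "L \<ge> k"
  shows "good_trunc n A 0 1 (\<lambda>i. if i = k then 1 else 0) x \<delta> L"
proof -
  define w :: "nat \<Rightarrow> real" where "w = (\<lambda>i. if i = k then 1 else 0)"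
  have w0: "\<And>i. 0 \<le> w i" unfolding w_def by simp
  have "good_trunc n A 0 1 w x \<delta> L"
  proof (rule generic[where e = w])
    show "\<And>i v. v < n \<Longrightarrow> 0 \<le> w i * mat_pow_vec n (transM n A 0 1) i x v"
      using weighted_stoch(1)[of n A x w] H w0 by blast
    show "\<And>i. (\<Sum>v<n. w i * mat_pow_vec n (transM n A 0 1) i x v) \<le> w i"
      using weighted_stoch(2)[of n A x w] H w0 by blast
    show "summable w" unfolding w_def using summable_single[of k "\<lambda>_. 1::real"] by simp
    have "(\<lambda>j. w (j + L + 1)) = (\<lambda>j. 0)" unfolding w_def using Lk by auto
    then show "(\<Sum>j. w (j + L + 1)) < \<delta> / 19" using H by simp
    show "0 < \<delta>" using H by simp
  qed
  then show ?thesis unfolding w_def .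
qed



definition sqn :: "nat \<Rightarrow> (nat \<Rightarrow> real) \<Rightarrow> real" where
  "sqn n v = (\<Sum>i<n. (v i)^2)"

lemma cont_sqn: "continuous_on UNIV (\<lambda>v::nat \<Rightarrow> real. sqn n v)"
  unfolding sqn_def by (intro continuous_intros continuous_on_product_coordinates)

lemma cont_g: "continuous_on UNIV (\<lambda>v::nat \<Rightarrow> real. sqn n (mat_vec n A v))"
  unfolding sqn_def mat_vec_def by (intro continuous_intros continuous_on_product_coordinates)

lemma max_exists:
  assumes n: "0 < n"
  shows "\<exists>w. sqn n w = 1 \<and> (\<forall>v. sqn n (mat_vec n A v) \<le> sqn n (mat_vec n A w) * sqn n v)"
proof -
  define g where "g v = sqn n (mat_vec n A v)" for v
  define F where "F i = (if i < n then {-1..1} else {0::real})" for i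
  define S where "S = PiE UNIV F \<inter> {v. sqn n v = 1}"
  have "compactin (product_topology (\<lambda>i. euclidean) UNIV) (PiE UNIV F)"
    unfolding compactin_PiE F_def by auto
  then have c1: "compact (PiE UNIV F)" unfolding euclidean_product_topology by simp
  have c2: "closed {v::nat \<Rightarrow> real. sqn n v = 1}"
    by (rule closed_Collect_eq) (use cont_sqn in auto)
  have cS: "compact S" unfolding S_def using c1 c2 by (rule compact_Int_closed)
  define e0 where "e0 = (\<lambda>i::nat. if i = 0 then (1::real) else 0)"
  have "e0 \<in> S" unfolding S_def F_def e0_def sqn_def using n
    by (auto simp: PiE_iff if_distrib power2_eq_square sum.delta cong: if_cong)
  then have Sne: "S \<noteq> {}" by auto
  have cg: "continuous_on S g" unfolding g_def using cont_g continuous_on_subset by blast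
  obtain w where w: "w \<in> S" and wmax: "\<And>y. y \<in> S \<Longrightarrow> g y \<le> g w"
    using continuous_attains_sup[OF cS Sne cg] by blast
  have g_loc: "g v = g v'" if "\<And>i. i < n \<Longrightarrow> v i = v' i" for v v'
    unfolding g_def sqn_def mat_vec_def using that by (intro sum.cong refl) auto
  have g_hom: "g (\<lambda>i. c * v i) = c^2 * g v" for c v
    unfolding g_def sqn_def mat_vec_def
    by (simp add: sum_distrib_left[symmetric] power_mult_distrib algebra_simps)
  have "g v \<le> g w * sqn n v" for v
  proof (cases "sqn n v = 0")
    case True
    then have "\<And>i. i < n \<Longrightarrow> v i = 0" unfolding sqn_def
      using sum_nonneg_eq_0_iff[of "{..<n}" "\<lambda>i. (v i)^2"] by auto
    then have "g v = g (\<lambda>i. 0 * v i)" by (intro g_loc) auto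
    also have "\<dots> = 0" using g_hom[of 0 v] by simp
    finally show ?thesis using True by simp
  next
    case False
    have sn: "0 \<le> sqn n v" unfolding sqn_def by (intro sum_nonneg) auto
    then have sp: "0 < sqn n v" using False by simp
    define r where "r = sqrt (sqn n v)"
    have rp: "0 < r" unfolding r_def using sp by simp
    have r2: "r^2 = sqn n v" unfolding r_def using sn by simp
    define v' where "v' i = (if i < n then v i / r else 0)" for i
    have "sqn n v' = sqn n v / r^2" unfolding sqn_def v'_def
      by (simp add: power_divide sum_divide_distrib)
    then have sv': "sqn n v' = 1" using r2 sp by simp
    have "v' \<in> PiE UNIV F"
    proof -
      have "-1 \<le> v i / r \<and> v i / r \<le> 1" if "i < n" for i
      proof -
        have "(v i)^2 \<le> sqn n v" unfolding sqn_def using that by (intro member_le_sum) auto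
        then have "(v i)^2 \<le> r^2" using r2 by simp
        then have "\<bar>v i\<bar> \<le> r" using rp by (metis abs_le_square_iff abs_of_pos)
        then have "\<bar>v i / r\<bar> \<le> 1" using rp by (simp add: abs_div)
        then show ?thesis unfolding abs_le_iff by linarith
      qed
      then show ?thesis unfolding F_def v'_def by (auto simp: PiE_iff)
    qed
    then have "v' \<in> S" unfolding S_def using sv' by auto
    then have "g v' \<le> g w" by (rule wmax)
    moreover have "g v' = g (\<lambda>i. (1/r) * v i)" by (intro g_loc) (auto simp: v'_def)
    moreover have "g (\<lambda>i. (1/r) * v i) = g v / r^2" using g_hom[of "1/r" v] by (simp add: power_divide)
    ultimately have "g v / r^2 \<le> g w" by simp
    then show ?thesis using r2 sp by (simp add: divide_le_eq mult.commute)
  qed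
  moreover have "sqn n w = 1" using w unfolding S_def by auto
  ultimately show ?thesis unfolding g_def by blast
qed



definition ipn :: "nat \<Rightarrow> (nat \<Rightarrow> real) \<Rightarrow> (nat \<Rightarrow> real) \<Rightarrow> real" where
  "ipn n a b = (\<Sum>i<n. a i * b i)"

lemma mv_add: "mat_vec n A (\<lambda>i. u i + t * h i) = (\<lambda>i. mat_vec n A u i + t * mat_vec n A h i)"
  unfolding mat_vec_def by (simp add: sum.distrib sum_distrib_left algebra_simps)

lemma sqn_add: "sqn n (\<lambda>i. a i + t * b i) = sqn n a + 2 * t * ipn n a b + t^2 * sqn n b"
  unfolding sqn_def ipn_def
  by (simp add: power2_eq_square sum.distrib sum_distrib_left algebra_simps)

lemma sqn_nonneg: "0 \<le> sqn n v"
  unfolding sqn_def by (intro sum_nonneg) auto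

lemma sqn_zero: "sqn n v = 0 \<Longrightarrow> i < n \<Longrightarrow> v i = 0"
  unfolding sqn_def using sum_nonneg_eq_0_iff[of "{..<n}" "\<lambda>i. (v i)^2"] by auto

lemma A_nonneg':
  assumes "undirected_graph n A" "i < n" "j < n" shows "0 \<le> A i j"
proof -
  have "A i j = 0 \<or> A i j = 1" using assms unfolding undirected_graph_def by blast
  then show ?thesis by auto
qed

lemma A_sym: "undirected_graph n A \<Longrightarrow> i < n \<Longrightarrow> j < n \<Longrightarrow> A i j = A j i"
  unfolding undirected_graph_def by blast

lemma ipn_sym:
  assumes G: "undirected_graph n A"
  shows "ipn n (mat_vec n A u) h = ipn n u (mat_vec n A h)"
proof -
  have "ipn n (mat_vec n A u) h = (\<Sum>i<n. \<Sum>j<n. A i j * u j * h i)"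
    unfolding ipn_def mat_vec_def by (simp add: sum_distrib_right)
  also have "\<dots> = (\<Sum>j<n. \<Sum>i<n. A i j * u j * h i)" by (rule sum.swap)
  also have "\<dots> = (\<Sum>j<n. \<Sum>i<n. u j * (A j i * h i))"
    by (intro sum.cong refl) (simp add: A_sym[OF G])
  also have "\<dots> = ipn n u (mat_vec n A h)"
    unfolding ipn_def mat_vec_def by (simp add: sum_distrib_left)
  finally show ?thesis .
qed

lemma quad_zero:
  fixes c d :: real
  assumes H: "\<And>t. 2 * t * c + t^2 * d \<le> 0"
  shows "c = 0"
proof (rule ccontr)
  assume c: "c \<noteq> 0"
  define e where "e = \<bar>d\<bar> + 1"
  have ep: "0 < e" unfolding e_def by simp
  define t where "t = c / e"
  have "2 * t * c = 2 * c^2 / e" unfolding t_def by (simp add: power2_eq_square)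
  moreover have "t^2 * d \<ge> - (c^2 / e)"
  proof -
    have "t^2 * d \<ge> - (t^2 * \<bar>d\<bar>)"
      by (metis abs_ge_minus_self abs_mult abs_of_nonneg minus_le_iff zero_le_power2)
    moreover have "t^2 * \<bar>d\<bar> \<le> t^2 * e" unfolding e_def by (intro mult_left_mono) auto
    moreover have "t^2 * e = c^2 / e" unfolding t_def using ep by (simp add: power2_eq_square)
    ultimately show ?thesis by linarith
  qed
  moreover have "0 < c^2 / e" using c ep by simp
  ultimately have "0 < 2 * t * c + t^2 * d" by linarith
  with H[of t] show False by linarith
qed

lemma max_nonneg:
  assumes G: "undirected_graph n A" and n: "0 < n"
  shows "\<exists>w. (\<forall>i. 0 \<le> w i) \<and> sqn n w = 1 \<and> (\<forall>v. sqn n (mat_vec n A v) \<le> sqn n (mat_vec n A w) * sqn n v)"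
proof -
  obtain w where w1: "sqn n w = 1" and wm: "\<And>v. sqn n (mat_vec n A v) \<le> sqn n (mat_vec n A w) * sqn n v"
    using max_exists[OF n, of A] by blast
  define w' where "w' i = \<bar>w i\<bar>" for i
  have s1: "sqn n w' = 1" using w1 unfolding sqn_def w'_def by simp
  have "sqn n (mat_vec n A w) \<le> sqn n (mat_vec n A w')"
    unfolding sqn_def
  proof (intro sum_mono)
    fix i assume i: "i \<in> {..<n}"
    have "\<bar>mat_vec n A w i\<bar> \<le> (\<Sum>j<n. \<bar>A i j * w j\<bar>)" unfolding mat_vec_def by (rule sum_abs)
    also have "\<dots> = mat_vec n A w' i" unfolding mat_vec_def w'_def
      using A_nonneg'[OF G] i by (intro sum.cong refl) (auto simp: abs_mult)
    finally have "\<bar>mat_vec n A w i\<bar> \<le> mat_vec n A w' i" .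
    then have "\<bar>mat_vec n A w i\<bar>^2 \<le> (mat_vec n A w' i)^2" by (intro power_mono) auto
    then show "(mat_vec n A w i)^2 \<le> (mat_vec n A w' i)^2" by simp
  qed
  then have "\<forall>v. sqn n (mat_vec n A v) \<le> sqn n (mat_vec n A w') * sqn n v"
    using wm sqn_nonneg by (meson mult_right_mono order_trans)
  moreover have "\<forall>i. 0 \<le> w' i" unfolding w'_def by simp
  ultimately show ?thesis using s1 by blast
qed

lemma eig_eq:
  assumes G: "undirected_graph n A" and w1: "sqn n w = 1"
    and wm: "\<And>v. sqn n (mat_vec n A v) \<le> sqn n (mat_vec n A w) * sqn n v"
  shows "\<And>i. i < n \<Longrightarrow> mat_vec n A (mat_vec n A w) i = sqn n (mat_vec n A w) * w i"
proof -
  define s where "s = sqn n (mat_vec n A w)"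
  define Aw where "Aw = mat_vec n A w"
  have key: "ipn n (mat_vec n A Aw) h - s * ipn n w h = 0" for h
  proof -
    have "2 * t * (ipn n Aw (mat_vec n A h) - s * ipn n w h) + t^2 * (sqn n (mat_vec n A h) - s * sqn n h) \<le> 0" for t
    proof -
      have "sqn n (mat_vec n A (\<lambda>i. w i + t * h i)) \<le> s * sqn n (\<lambda>i. w i + t * h i)"
        using wm[of "\<lambda>i. w i + t * h i"] unfolding s_def by (simp add: mult.commute)
      then have "s + 2 * t * ipn n Aw (mat_vec n A h) + t^2 * sqn n (mat_vec n A h)
          \<le> s * (1 + 2 * t * ipn n w h + t^2 * sqn n h)"
        unfolding mv_add sqn_add w1 by (simp add: s_def Aw_def)
      then show ?thesis by (simp add: algebra_simps)
    qed
    then have "ipn n Aw (mat_vec n A h) - s * ipn n w h = 0" by (rule quad_zero)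
    then show ?thesis unfolding Aw_def using ipn_sym[OF G, of Aw h] by (simp add: Aw_def)
  qed
  define d where "d i = mat_vec n A Aw i - s * w i" for i
  have "ipn n d d = ipn n (mat_vec n A Aw) d - s * ipn n w d"
    unfolding ipn_def d_def by (simp add: sum_subtractf sum_distrib_left sum.distrib algebra_simps)
  then have "sqn n d = 0" using key[of d] unfolding sqn_def ipn_def by (simp add: power2_eq_square)
  then show "\<And>i. i < n \<Longrightarrow> mat_vec n A (mat_vec n A w) i = sqn n (mat_vec n A w) * w i"
    using sqn_zero unfolding d_def s_def Aw_def by fastforce
qed



lemma sqrt_eig:
  assumes G: "undirected_graph n A" and n: "0 < n"
  shows "\<exists>r. 0 \<le> r \<and> r \<in> eigenvalues n A \<and> (\<forall>v. sqn n (mat_vec n A v) \<le> r^2 * sqn n v)"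
proof -
  obtain w where w0: "\<And>i. 0 \<le> w i" and w1: "sqn n w = 1"
    and wm: "\<And>v. sqn n (mat_vec n A v) \<le> sqn n (mat_vec n A w) * sqn n v"
    using max_nonneg[OF G n] by blast
  define s where "s = sqn n (mat_vec n A w)"
  define Aw where "Aw = mat_vec n A w"
  have s0: "0 \<le> s" unfolding s_def by (rule sqn_nonneg)
  define r where "r = sqrt s"
  have r0: "0 \<le> r" unfolding r_def using s0 by simp
  have r2: "r^2 = s" unfolding r_def using s0 by simp
  have AAw: "\<And>i. i < n \<Longrightarrow> mat_vec n A Aw i = s * w i"
    using eig_eq[OF G w1 wm] unfolding s_def Aw_def by blast
  obtain i0 where i0: "i0 < n" "w i0 \<noteq> 0"
  proof -
    have "\<not> (\<forall>i<n. w i = 0)"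
    proof
      assume "\<forall>i<n. w i = 0"
      then have "sqn n w = 0" unfolding sqn_def by simp
      then show False using w1 by simp
    qed
    then show ?thesis using that by blast
  qed
  have Aw0: "0 \<le> Aw i" if "i < n" for i
    unfolding Aw_def mat_vec_def using A_nonneg'[OF G that] w0 by (intro sum_nonneg mult_nonneg_nonneg) auto
  have "r \<in> eigenvalues n A"
  proof (cases "s = 0")
    case True
    then have "r = 0" unfolding r_def by simp
    have "Aw i = 0" if "i < n" for i
      using sqn_zero[of n Aw i] True that unfolding s_def Aw_def by simp
    then show ?thesis unfolding eigenvalues_def using i0 \<open>r = 0\<close>
      by (intro CollectI exI[of _ w] conjI) (auto simp: Aw_def mat_vec_def)
  next
    case False
    then have rp: "0 < r" unfolding r_def using s0 by simp
    define z where "z i = Aw i + r * w i" for i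
    have "(\<Sum>j<n. A i j * z j) = r * z i" if "i < n" for i
    proof -
      have "(\<Sum>j<n. A i j * z j) = mat_vec n A Aw i + r * Aw i"
        unfolding z_def Aw_def mat_vec_def by (simp add: sum.distrib sum_distrib_left algebra_simps)
      also have "\<dots> = r^2 * w i + r * Aw i" using AAw that r2 by simp
      also have "\<dots> = r * z i" unfolding z_def by (simp add: power2_eq_square algebra_simps)
      finally show ?thesis .
    qed
    moreover have "z i0 \<noteq> 0"
    proof -
      have "0 < w i0" using w0[of i0] i0 by simp
      then have "0 < r * w i0" using rp by simp
      then show ?thesis unfolding z_def using Aw0[OF i0(1)] by simp
    qed
    ultimately show ?thesis unfolding eigenvalues_def using i0 by blast
  qed
  moreover have "\<forall>v. sqn n (mat_vec n A v) \<le> r^2 * sqn n v" using wm r2 unfolding s_def by simp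
  ultimately show ?thesis using r0 by blast
qed

lemma katz_pow:
  assumes G: "undirected_graph n A" and x: "valid_input n x" and r0: "0 \<le> r"
    and rb: "\<And>v. sqn n (mat_vec n A v) \<le> r^2 * sqn n v"
    and v: "v < n"
  shows "0 \<le> mat_pow_vec n A i x v \<and> mat_pow_vec n A i x v \<le> r ^ i"
proof -
  have xs: "sqn n x \<le> 1"
  proof -
    have x0: "\<And>i. i < n \<Longrightarrow> 0 \<le> x i" using x unfolding valid_input_def by auto
    have xa: "(\<Sum>i<n. \<bar>x i\<bar>) = (\<Sum>i<n. x i)" using x0 by (intro sum.cong) auto
    have "norm1 n x = 1" using x unfolding valid_input_def by simp
    then have xsum: "(\<Sum>i<n. x i) = 1" unfolding norm1_def xa .
    have xle: "x i \<le> 1" if "i < n" for i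
    proof -
      have "x i \<le> (\<Sum>i<n. x i)" using x0 that by (intro member_le_sum) auto
      then show ?thesis using xsum by simp
    qed
    have "sqn n x \<le> (\<Sum>i<n. x i)" unfolding sqn_def
    proof (intro sum_mono)
      fix i assume "i \<in> {..<n}"
      then have "0 \<le> x i" "x i \<le> 1" using x0 xle by auto
      then have "x i * x i \<le> 1 * x i" by (intro mult_right_mono) auto
      then show "(x i)^2 \<le> x i" by (simp add: power2_eq_square)
    qed
    then show ?thesis using xsum by simp
  qed
  have nn: "\<forall>v<n. 0 \<le> mat_pow_vec n A i x v" 
  proof (induction i)
    case 0 then show ?case using x unfolding valid_input_def mpv_0 by simp
  next
    case (Suc i)
    show ?case unfolding mpv_Suc mat_vec_def
    proof (intro allI impI sum_nonneg mult_nonneg_nonneg)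
      fix v j assume "v < n" "j \<in> {..<n}"
      then show "0 \<le> A v j" using A_nonneg'[OF G] by simp
      show "0 \<le> mat_pow_vec n A i x j" using Suc.IH \<open>j \<in> {..<n}\<close> by simp
    qed
  qed
  have sq: "sqn n (mat_pow_vec n A i x) \<le> (r^2)^i"
  proof (induction i)
    case 0 then show ?case using xs by (simp add: mpv_0)
  next
    case (Suc i)
    have "sqn n (mat_pow_vec n A (Suc i) x) \<le> r^2 * sqn n (mat_pow_vec n A i x)"
      unfolding mpv_Suc by (rule rb)
    also have "\<dots> \<le> r^2 * (r^2)^i" using Suc by (intro mult_left_mono) auto
    finally show ?case by simp
  qed
  have "(mat_pow_vec n A i x v)^2 \<le> sqn n (mat_pow_vec n A i x)"
    unfolding sqn_def using v by (intro member_le_sum) auto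
  also have "\<dots> \<le> (r^i)^2"
  proof -
    have "(r^2)^i = (r^i)^2" unfolding power_mult[symmetric] by (simp add: mult.commute)
    then show ?thesis using sq by simp
  qed
  finally have "(mat_pow_vec n A i x v)^2 \<le> (r^i)^2" .
  then have "mat_pow_vec n A i x v \<le> r^i" by (rule power2_le_imp_le) (simp add: r0)
  then show "0 \<le> mat_pow_vec n A i x v \<and> mat_pow_vec n A i x v \<le> r ^ i" using nn v by auto
qed

lemma case4:
  assumes G: "undirected_graph n A" and b: "0 < \<beta>" and bl: "\<beta> * largest_eigenvalue n A < 1"
    and fin: "finite (eigenvalues n A)"
  shows "\<exists>C::real. \<forall>x \<delta>. valid_input n x \<and> 0 < \<delta> \<and> \<delta> < 1 \<longrightarrow>
         (\<exists>L::nat. real L \<le> C * (1 + ln (1 / \<delta>)) \<and>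
            good_trunc n A 0 0 (\<lambda>i. \<beta> ^ i) x \<delta> L)"
proof (cases "n = 0")
  case True
  have "good_trunc n A 0 0 (\<lambda>i. \<beta> ^ i) x \<delta> 0" if "0 < \<delta>" for x and \<delta> :: real
    by (rule generic[where e = "\<lambda>_. 0"]) (use True that in auto)
  then show ?thesis by (intro exI[of _ "0::real"] allI impI exI[of _ "0::nat"]) auto
next
  case False
  then have n: "0 < n" by simp
  obtain r where r0: "0 \<le> r" and rE: "r \<in> eigenvalues n A"
    and rb: "\<And>v. sqn n (mat_vec n A v) \<le> r^2 * sqn n v"
    using sqrt_eig[OF G n] by blast
  have rl: "r \<le> largest_eigenvalue n A" unfolding largest_eigenvalue_def using fin rE by simp
  define q where "q = \<beta> * r"
  have q0: "0 \<le> q" unfolding q_def using b r0 by simp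
  have q1: "q < 1"
  proof -
    have "\<beta> * r \<le> \<beta> * largest_eigenvalue n A" using rl b by (intro mult_left_mono) auto
    then show ?thesis unfolding q_def using bl by simp
  qed
  define D where "D = 19 * (real n / (1 - q))"
  have D0: "0 \<le> D" unfolding D_def using q1 by simp
  obtain C where C: "\<And>\<delta>. 0 < \<delta> \<and> \<delta> < 1 \<Longrightarrow> (\<exists>L::nat. real L \<le> C * (1 + ln (1 / \<delta>)) \<and> D * q ^ (L + 1) < \<delta>)"
    using chooseL[OF q0 q1 D0] by blast
  show ?thesis
  proof (intro exI[of _ C] allI impI)
    fix x and \<delta> :: real assume H: "valid_input n x \<and> 0 < \<delta> \<and> \<delta> < 1"
    then obtain L where L: "real L \<le> C * (1 + ln (1 / \<delta>))" "D * q ^ (L + 1) < \<delta>"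
      using C by blast
    have KP: "\<And>i v. v < n \<Longrightarrow> 0 \<le> mat_pow_vec n A i x v \<and> mat_pow_vec n A i x v \<le> r ^ i"
      using katz_pow[OF G _ r0 rb] H by blast
    have "good_trunc n A 0 0 (\<lambda>i. \<beta> ^ i) x \<delta> L"
    proof (rule generic[where e = "\<lambda>i. real n * q ^ i"])
      show "\<And>i v. v < n \<Longrightarrow> 0 \<le> \<beta> ^ i * mat_pow_vec n (transM n A 0 0) i x v"
        unfolding transM00 using KP b by (meson mult_nonneg_nonneg zero_le_power less_imp_le)
      show "(\<Sum>v<n. \<beta> ^ i * mat_pow_vec n (transM n A 0 0) i x v) \<le> real n * q ^ i" for i
      proof -
        have "(\<Sum>v<n. \<beta> ^ i * mat_pow_vec n (transM n A 0 0) i x v) \<le> (\<Sum>v<n. \<beta> ^ i * r ^ i)"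
        proof (intro sum_mono mult_left_mono)
          fix v assume "v \<in> {..<n}"
          then show "mat_pow_vec n (transM n A 0 0) i x v \<le> r ^ i" unfolding transM00 using KP by blast
        qed (use b in simp)
        also have "\<dots> = real n * q ^ i" unfolding q_def by (simp add: power_mult_distrib)
        finally show ?thesis .
      qed
      show "summable (\<lambda>i. real n * q ^ i)" using geom_tail(1)[OF q0 q1, of "real n"] by simp
      have "(\<Sum>j. real n * q ^ (j + L + 1)) = real n * q ^ (L + 1) / (1 - q)"
        using geom_tail(2)[OF q0 q1] by simp
      also have "\<dots> = (real n / (1-q)) * q^(L+1)" by simp
      finally have e1: "(\<Sum>j. real n * q ^ (j + L + 1)) = (real n / (1-q)) * q^(L+1)" .
      have e2: "D * q^(L+1) = 19 * ((real n / (1-q)) * q^(L+1))" unfolding D_def by (simp only: mult.assoc)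
      show "(\<Sum>j. real n * q ^ (j + L + 1)) < \<delta> / 19" using L(2) e1 e2 by linarith
      show "0 < \<delta>" using H by simp
    qed
    then show "\<exists>L::nat. real L \<le> C * (1 + ln (1 / \<delta>)) \<and> good_trunc n A 0 0 (\<lambda>i. \<beta> ^ i) x \<delta> L"
      using L(1) by blast
  qed
qed


theorem lemmaC3:
  shows
  \<comment> \<open>(i) PageRank: a = 0, b = 1, w_i = alpha (1-alpha)^i; L = O(log(1/delta))\<close>
  "(\<forall>\<alpha>::real. 0 < \<alpha> \<and> \<alpha> < 1 \<longrightarrow>
      (\<exists>C::real. \<forall>n A x \<delta>. undirected_graph n A \<and> valid_input n x \<and> 0 < \<delta> \<and> \<delta> < 1 \<longrightarrow>
         (\<exists>L::nat. real L \<le> C * (1 + ln (1 / \<delta>)) \<and>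
            good_trunc n A 0 1 (\<lambda>i. \<alpha> * (1 - \<alpha>) ^ i) x \<delta> L)))
   \<and>
  \<comment> \<open>(ii) heat kernel PageRank: a = 0, b = 1, w_i = e^{-t} t^i / i!; L = O(log(1/delta))\<close>
   (\<forall>t::real. 0 < t \<longrightarrow>
      (\<exists>C::real. \<forall>n A x \<delta>. undirected_graph n A \<and> valid_input n x \<and> 0 < \<delta> \<and> \<delta> < 1 \<longrightarrow>
         (\<exists>L::nat. real L \<le> C * (1 + ln (1 / \<delta>)) \<and>
            good_trunc n A 0 1 (\<lambda>i. exp (- t) * t ^ i / fact i) x \<delta> L)))
   \<and>
  \<comment> \<open>(iii) k-hop transition probability: a = 0, b = 1, w_k = 1, w_i = 0 otherwise; any L \<ge> k\<close>
   (\<forall>k::nat. \<forall>n A x \<delta>. undirected_graph n A \<and> valid_input n x \<and> 0 < \<delta> \<and> \<delta> < 1 \<longrightarrow>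
         (\<forall>L::nat. L \<ge> k \<longrightarrow>
            good_trunc n A 0 1 (\<lambda>i. if i = k then 1 else 0) x \<delta> L))
   \<and>
  \<comment> \<open>(iv) Katz: a = b = 0, w_i = beta^i with 0 < beta < 1/lambda_1; L = O(log(1/delta))\<close>
   (\<forall>\<beta>::real. \<forall>n A. undirected_graph n A \<and> 0 < \<beta> \<and> \<beta> * largest_eigenvalue n A < 1 \<longrightarrow>
      (\<exists>C::real. \<forall>x \<delta>. valid_input n x \<and> 0 < \<delta> \<and> \<delta> < 1 \<longrightarrow>
         (\<exists>L::nat. real L \<le> C * (1 + ln (1 / \<delta>)) \<and>
            good_trunc n A 0 0 (\<lambda>i. \<beta> ^ i) x \<delta> L)))"
proof (intro conjI allI impI)
  fix \<alpha> :: real assume "0 < \<alpha> \<and> \<alpha> < 1"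
  then show "\<exists>C::real. \<forall>n A x \<delta>. undirected_graph n A \<and> valid_input n x \<and> 0 < \<delta> \<and> \<delta> < 1 \<longrightarrow>
         (\<exists>L::nat. real L \<le> C * (1 + ln (1 / \<delta>)) \<and>
            good_trunc n A 0 1 (\<lambda>i. \<alpha> * (1 - \<alpha>) ^ i) x \<delta> L)"
    using case1 by blast
next
  fix t :: real assume "0 < t"
  then show "\<exists>C::real. \<forall>n A x \<delta>. undirected_graph n A \<and> valid_input n x \<and> 0 < \<delta> \<and> \<delta> < 1 \<longrightarrow>
         (\<exists>L::nat. real L \<le> C * (1 + ln (1 / \<delta>)) \<and>
            good_trunc n A 0 1 (\<lambda>i. exp (- t) * t ^ i / fact i) x \<delta> L)"
    using case2 by blast
next
  fix k :: nat and n A x L and \<delta> :: real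
  assume "undirected_graph n A \<and> valid_input n x \<and> 0 < \<delta> \<and> \<delta> < 1" "k \<le> L"
  then show "good_trunc n A 0 1 (\<lambda>i. if i = k then 1 else 0) x \<delta> L" by (rule case3)
next
  fix \<beta> :: real and n A
  assume H: "undirected_graph n A \<and> 0 < \<beta> \<and> \<beta> * largest_eigenvalue n A < 1"
  then show "\<exists>C::real. \<forall>x \<delta>. valid_input n x \<and> 0 < \<delta> \<and> \<delta> < 1 \<longrightarrow>
         (\<exists>L::nat. real L \<le> C * (1 + ln (1 / \<delta>)) \<and>
            good_trunc n A 0 0 (\<lambda>i. \<beta> ^ i) x \<delta> L)"
    using case4[of n A \<beta>] eig_finite[of n A] by blast
qed

end
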